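(* Assume the Two-interval setup below, with $\pm a$ in the limit point case and $0^\mp$ in the limit circle nonoscillatory case. Let $R_0\in SL(2,\mathbb R)$ with $(R_0)_{11}=(R_0)_{22}$, and let $S_{R_0}$ be the restriction of $S_{max}$ to $\{g:(\tilde g(0^-),\tilde g'(0^-))^T=R_0(\tilde g(0^+),\tilde g'(0^+))^T\}$. Define $\alpha,\alpha'\in(0,\pi]$ from $R_0=\begin{pmatrix}R_{11}&R_{12}\\R_{21}&R_{11}\end{pmatrix}$ by: $\alpha=\cot^{-1}\frac{R_{11}+1}{R_{12}}$, $\alpha'=\cot^{-1}\frac{R_{11}-1}{R_{12}}$ if $R_{12}\ne0$; $\alpha=\cot^{-1}\frac{-R_{21}}2$, $\alpha'=\pi$ if $R_{12}=0$, $R_{11}=-1$; $\alpha=\pi$, $\alpha'=\cot^{-1}\frac{R_{21}}2$ if $R_{12}=0$, $R_{11}=1$. Then $S_{R_0}$ is unitarily equivalent to $T^+_\alpha\oplus T^+_{\alpha'}$ in $L^2((0,a);rdx)\oplus L^2((0,a);rdx)$.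
   Context: Two-interval setup. Let $a\in(0,\infty]$ and let $p,q,r$ be real measurable on $(-a,0)\cup(0,a)$, even ($p(-x)=p(x)$ etc.), with $p,r>0$ a.e. and $1/p,q,r\in L^1_{loc}((-a,0))$ (hence also on $(0,a)$). Let $\tau^\pm$ be the expression $\frac1r[-\frac{d}{dx}p\frac{d}{dx}+q]$ on $(0,a)$ resp. $(-a,0)$, with maximal/minimal operators $T^\pm_{max},T^\pm_{min}$ in $L^2$ of the respective interval with weight $r$ (maximal: $\tau^\pm$ on $g\in L^2$ with $g,pg'\in AC_{loc}$ and $\tau^\pm g\in L^2$; minimal: closure of restriction to compactly supported elements); $S_{max}=T^-_{max}\oplus T^+_{max}$, $S_{min}=T^-_{min}\oplus T^+_{min}$, and $S_{min}$ is assumed bounded below by $\lambda_0$. $y^{[1]}=py'$, $W(f,g)=fg^{[1]}-f^{[1]}g$. Limit circle at an endpoint: all solutions of $\tau u=zu$ in $L^2(rdx)$ near it for all $z$; limit point otherwise. At $0^+$ (left endpoint of $(0,a)$) fix principal/nonprincipal solutions $u_{0^+},\hat u_{0^+}$ of $\tau u=\lambda_0u$ (principal: real solution nonvanishing near $0^+$ with $\int p^{-1}u^{-2}=\infty$ near $0^+$; nonprincipal: linearly independent real solution) with $W(\hat u_{0^+},u_{0^+})=1$, and at $0^-$ use $u_{0^-}(x)=-u_{0^+}(-x)$, $\hat u_{0^-}(x)=\hat u_{0^+}(-x)$. Generalized boundary values: $\tilde g(0^+)=-\lim_{x\downarrow0}W(u_{0^+},g)(x)$, $\tilde g'(0^+)=\lim_{x\downarrow0}W(\hat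 u_{0^+},g)(x)$, $\tilde g(0^-)=-\lim_{x\uparrow0}W(u_{0^-},g)(x)$, $\tilde g'(0^-)=\lim_{x\uparrow0}W(\hat u_{0^-},g)(x)$. For $\alpha\in(0,\pi]$, $T^+_\alpha$ is the restriction of $T^+_{max}$ to $\{g:\tilde g(0^+)\cos\alpha+\tilde g'(0^+)\sin\alpha=0\}$. $\cot^{-1}$ takes values in $(0,\pi)$. *)

theory Defs
  imports "HOL-Analysis.Analysis"
begin

definition arccot :: "real \<Rightarrow> real" where
  "arccot x = pi / 2 - arctan x"   (* inverse cotangent with values in (0, pi) *)

definition intv :: "ereal \<Rightarrow> ereal \<Rightarrow> real set" where
  "intv lo hi = {x. lo < ereal x \<and> ereal x < hi}"

(* L^2((lo,hi); r dx) membership of a representative *)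
definition L2w :: "(real \<Rightarrow> real) \<Rightarrow> real set \<Rightarrow> (real \<Rightarrow> complex) \<Rightarrow> bool" where
  "L2w r A g \<longleftrightarrow> set_borel_measurable lborel A g \<and>
     set_integrable lborel A (\<lambda>x. r x * (cmod (g x))\<^sup>2)"

definition normsq :: "(real \<Rightarrow> real) \<Rightarrow> real set \<Rightarrow> (real \<Rightarrow> complex) \<Rightarrow> real" where
  "normsq r A g = (LINT x:A|lborel. r x * (cmod (g x))\<^sup>2)"

definition innerw :: "(real \<Rightarrow> real) \<Rightarrow> real set \<Rightarrow> (real \<Rightarrow> complex) \<Rightarrow> (real \<Rightarrow> complex) \<Rightarrow> complex" where
  "innerw r A f g = (LINT x:A|lborel. complex_of_real (r x) * f x * cnj (g x))"

(* equality almost everywhere on A (equality as elements of L^2) *)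
definition aeq :: "real set \<Rightarrow> (real \<Rightarrow> complex) \<Rightarrow> (real \<Rightarrow> complex) \<Rightarrow> bool" where
  "aeq A g h \<longleftrightarrow> (AE x in lborel. x \<in> A \<longrightarrow> g x = h x)"

(* Quasi-derivative relation on the interval I: g and g1 (= p g') are locally
   absolutely continuous on I (indefinite integrals of L^1_loc functions),
   g' = g1/p and (g1)' = q g - r f, i.e. f = tau g = (1/r)(-(p g')' + q g). *)
definition qd :: "(real \<Rightarrow> real) \<Rightarrow> (real \<Rightarrow> real) \<Rightarrow> (real \<Rightarrow> real) \<Rightarrow> real set \<Rightarrow>
    (real \<Rightarrow> complex) \<Rightarrow> (real \<Rightarrow> complex) \<Rightarrow> (real \<Rightarrow> complex) \<Rightarrow> bool" where
  "qd p q r I g g1 f \<longleftrightarrow> (\<forall>x\<in>I. \<forall>y\<in>I. x \<le> y \<longrightarrow>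
      set_integrable lborel {x..y} (\<lambda>t. g1 t / complex_of_real (p t)) \<and>
      g y - g x = (LINT t:{x..y}|lborel. g1 t / complex_of_real (p t)) \<and>
      set_integrable lborel {x..y} (\<lambda>t. complex_of_real (q t) * g t - complex_of_real (r t) * f t) \<and>
      g1 y - g1 x = (LINT t:{x..y}|lborel. complex_of_real (q t) * g t - complex_of_real (r t) * f t))"

definition solves :: "(real \<Rightarrow> real) \<Rightarrow> (real \<Rightarrow> real) \<Rightarrow> (real \<Rightarrow> real) \<Rightarrow> real set \<Rightarrow>
    complex \<Rightarrow> (real \<Rightarrow> complex) \<Rightarrow> (real \<Rightarrow> complex) \<Rightarrow> bool" where
  "solves p q r I z u u1 \<longleftrightarrow> qd p q r I u u1 (\<lambda>t. z * u t)"

definition maxrel :: "(real \<Rightarrow> real) \<Rightarrow> (real \<Rightarrow> real) \<Rightarrow> (real \<Rightarrow> real) \<Rightarrow> real set \<Rightarrow>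
    (real \<Rightarrow> complex) \<Rightarrow> (real \<Rightarrow> complex) \<Rightarrow> bool" where
  "maxrel p q r I g f \<longleftrightarrow> L2w r I g \<and> L2w r I f \<and> (\<exists>g1. qd p q r I g g1 f)"

definition preminrel :: "(real \<Rightarrow> real) \<Rightarrow> (real \<Rightarrow> real) \<Rightarrow> (real \<Rightarrow> real) \<Rightarrow> real set \<Rightarrow>
    (real \<Rightarrow> complex) \<Rightarrow> (real \<Rightarrow> complex) \<Rightarrow> bool" where
  "preminrel p q r I g f \<longleftrightarrow> maxrel p q r I g f \<and>
     (\<exists>K. compact K \<and> K \<subseteq> I \<and> (\<forall>x\<in>I - K. g x = 0))"

definition LC_left :: "(real \<Rightarrow> real) \<Rightarrow> (real \<Rightarrow> real) \<Rightarrow> (real \<Rightarrow> real) \<Rightarrow> ereal \<Rightarrow> ereal \<Rightarrow> bool" where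
  "LC_left p q r lo hi \<longleftrightarrow> (\<forall>z u u1. solves p q r (intv lo hi) z u u1 \<longrightarrow>
     (\<exists>c\<in>intv lo hi. set_integrable lborel (intv lo (ereal c)) (\<lambda>x. r x * (cmod (u x))\<^sup>2)))"

definition LC_right :: "(real \<Rightarrow> real) \<Rightarrow> (real \<Rightarrow> real) \<Rightarrow> (real \<Rightarrow> real) \<Rightarrow> ereal \<Rightarrow> ereal \<Rightarrow> bool" where
  "LC_right p q r lo hi \<longleftrightarrow> (\<forall>z u u1. solves p q r (intv lo hi) z u u1 \<longrightarrow>
     (\<exists>c\<in>intv lo hi. set_integrable lborel (intv (ereal c) hi) (\<lambda>x. r x * (cmod (u x))\<^sup>2)))"

definition nonosc_left :: "(real \<Rightarrow> real) \<Rightarrow> (real \<Rightarrow> real) \<Rightarrow> (real \<Rightarrow> real) \<Rightarrow> ereal \<Rightarrow> ereal \<Rightarrow> bool" where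
  "nonosc_left p q r lo hi \<longleftrightarrow> (\<forall>lam::real. \<forall>u u1.
     solves p q r (intv lo hi) (complex_of_real lam) u u1 \<and> (\<forall>t\<in>intv lo hi. u t \<in> \<real>) \<and>
     (\<exists>t\<in>intv lo hi. u t \<noteq> 0) \<longrightarrow>
     (\<exists>c\<in>intv lo hi. finite {t\<in>intv lo (ereal c). u t = 0}))"

definition nonosc_right :: "(real \<Rightarrow> real) \<Rightarrow> (real \<Rightarrow> real) \<Rightarrow> (real \<Rightarrow> real) \<Rightarrow> ereal \<Rightarrow> ereal \<Rightarrow> bool" where
  "nonosc_right p q r lo hi \<longleftrightarrow> (\<forall>lam::real. \<forall>u u1.
     solves p q r (intv lo hi) (complex_of_real lam) u u1 \<and> (\<forall>t\<in>intv lo hi. u t \<in> \<real>) \<and>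
     (\<exists>t\<in>intv lo hi. u t \<noteq> 0) \<longrightarrow>
     (\<exists>c\<in>intv lo hi. finite {t\<in>intv (ereal c) hi. u t = 0}))"

type_synonym pfun = "(real \<Rightarrow> complex) \<times> (real \<Rightarrow> complex)"

definition padd :: "pfun \<Rightarrow> pfun \<Rightarrow> pfun" where
  "padd x y = ((\<lambda>t. fst x t + fst y t), (\<lambda>t. snd x t + snd y t))"

definition psmult :: "complex \<Rightarrow> pfun \<Rightarrow> pfun" where
  "psmult c x = ((\<lambda>t. c * fst x t), (\<lambda>t. c * snd x t))"

definition L2pair :: "(real \<Rightarrow> real) \<Rightarrow> real set \<Rightarrow> real set \<Rightarrow> pfun \<Rightarrow> bool" where
  "L2pair r A1 A2 x \<longleftrightarrow> L2w r A1 (fst x) \<and> L2w r A2 (snd x)"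

definition pnormsq :: "(real \<Rightarrow> real) \<Rightarrow> real set \<Rightarrow> real set \<Rightarrow> pfun \<Rightarrow> real" where
  "pnormsq r A1 A2 x = normsq r A1 (fst x) + normsq r A2 (snd x)"

definition pinner :: "(real \<Rightarrow> real) \<Rightarrow> real set \<Rightarrow> real set \<Rightarrow> pfun \<Rightarrow> pfun \<Rightarrow> complex" where
  "pinner r A1 A2 x y = innerw r A1 (fst x) (fst y) + innerw r A2 (snd x) (snd y)"

definition paeq :: "real set \<Rightarrow> real set \<Rightarrow> pfun \<Rightarrow> pfun \<Rightarrow> bool" where
  "paeq A1 A2 x y \<longleftrightarrow> aeq A1 (fst x) (fst y) \<and> aeq A2 (snd x) (snd y)"

(* graph membership modulo equality a.e. (i.e. as an operator on L^2 classes) *)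
definition in_graph :: "real set \<Rightarrow> real set \<Rightarrow> (pfun \<Rightarrow> pfun \<Rightarrow> bool) \<Rightarrow> pfun \<Rightarrow> pfun \<Rightarrow> bool" where
  "in_graph A1 A2 G x f \<longleftrightarrow> (\<exists>x' f'. paeq A1 A2 x x' \<and> paeq A1 A2 f f' \<and> G x' f')"

definition graph_closure :: "(real \<Rightarrow> real) \<Rightarrow> real set \<Rightarrow> real set \<Rightarrow> (pfun \<Rightarrow> pfun \<Rightarrow> bool) \<Rightarrow> pfun \<Rightarrow> pfun \<Rightarrow> bool" where
  "graph_closure r A1 A2 G x f \<longleftrightarrow> L2pair r A1 A2 x \<and> L2pair r A1 A2 f \<and>
     (\<exists>xs fs. (\<forall>n. G (xs n) (fs n)) \<and>
        (\<lambda>n. pnormsq r A1 A2 (padd (xs n) (psmult (-1) x))) \<longlonglongrightarrow> 0 \<and>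
        (\<lambda>n. pnormsq r A1 A2 (padd (fs n) (psmult (-1) f))) \<longlonglongrightarrow> 0)"

(* Unitary equivalence of operators G1 in L^2(A1)(+)L^2(A2) (weight r1) and
   G2 in L^2(B1)(+)L^2(B2) (weight r2): a linear, isometric, surjective U
   (acting on representatives, modulo a.e. equality) with U G1 U^{-1} = G2. *)
definition unit_equiv :: "(real \<Rightarrow> real) \<Rightarrow> real set \<Rightarrow> real set \<Rightarrow> (pfun \<Rightarrow> pfun \<Rightarrow> bool) \<Rightarrow>
    (real \<Rightarrow> real) \<Rightarrow> real set \<Rightarrow> real set \<Rightarrow> (pfun \<Rightarrow> pfun \<Rightarrow> bool) \<Rightarrow> bool" where
  "unit_equiv r1 A1 A2 G1 r2 B1 B2 G2 \<longleftrightarrow> (\<exists>U.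
     (\<forall>x. L2pair r1 A1 A2 x \<longrightarrow> L2pair r2 B1 B2 (U x)) \<and>
     (\<forall>x y c. L2pair r1 A1 A2 x \<and> L2pair r1 A1 A2 y \<longrightarrow>
        paeq B1 B2 (U (padd x (psmult c y))) (padd (U x) (psmult c (U y)))) \<and>
     (\<forall>x. L2pair r1 A1 A2 x \<longrightarrow> pnormsq r2 B1 B2 (U x) = pnormsq r1 A1 A2 x) \<and>
     (\<forall>y. L2pair r2 B1 B2 y \<longrightarrow> (\<exists>x. L2pair r1 A1 A2 x \<and> paeq B1 B2 (U x) y)) \<and>
     (\<forall>x f. L2pair r1 A1 A2 x \<and> L2pair r1 A1 A2 f \<longrightarrow>
        (in_graph A1 A2 G1 x f \<longleftrightarrow> in_graph B1 B2 G2 (U x) (U f))))"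

(* g (with quasi-derivative g1) has generalized boundary values (b0,b1) at 0+,
   w.r.t. principal/nonprincipal solutions u,uh (quasi-derivatives u1,uh1) at 0+ *)
definition bv_plus :: "(real \<Rightarrow> complex) \<Rightarrow> (real \<Rightarrow> complex) \<Rightarrow> (real \<Rightarrow> complex) \<Rightarrow> (real \<Rightarrow> complex) \<Rightarrow>
    (real \<Rightarrow> complex) \<Rightarrow> (real \<Rightarrow> complex) \<Rightarrow> complex \<Rightarrow> complex \<Rightarrow> bool" where
  "bv_plus u u1 uh uh1 g g1 b0 b1 \<longleftrightarrow>
     ((\<lambda>x. u x * g1 x - u1 x * g x) \<longlongrightarrow> - b0) (at_right 0) \<and>
     ((\<lambda>x. uh x * g1 x - uh1 x * g x) \<longlongrightarrow> b1) (at_right 0)"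

(* At 0-: u_{0-}(x) = -u(-x) has quasi-derivative u1(-x);
   uh_{0-}(x) = uh(-x) has quasi-derivative -uh1(-x) (p is even). *)
definition bv_minus :: "(real \<Rightarrow> complex) \<Rightarrow> (real \<Rightarrow> complex) \<Rightarrow> (real \<Rightarrow> complex) \<Rightarrow> (real \<Rightarrow> complex) \<Rightarrow>
    (real \<Rightarrow> complex) \<Rightarrow> (real \<Rightarrow> complex) \<Rightarrow> complex \<Rightarrow> complex \<Rightarrow> bool" where
  "bv_minus u u1 uh uh1 g g1 b0 b1 \<longleftrightarrow>
     ((\<lambda>x. (- u (-x)) * g1 x - u1 (-x) * g x) \<longlongrightarrow> - b0) (at_left 0) \<and>
     ((\<lambda>x. uh (-x) * g1 x - (- uh1 (-x)) * g x) \<longlongrightarrow> b1) (at_left 0)"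

definition Talpha :: "(real \<Rightarrow> real) \<Rightarrow> (real \<Rightarrow> real) \<Rightarrow> (real \<Rightarrow> real) \<Rightarrow> ereal \<Rightarrow>
    (real \<Rightarrow> complex) \<Rightarrow> (real \<Rightarrow> complex) \<Rightarrow> (real \<Rightarrow> complex) \<Rightarrow> (real \<Rightarrow> complex) \<Rightarrow>
    real \<Rightarrow> (real \<Rightarrow> complex) \<Rightarrow> (real \<Rightarrow> complex) \<Rightarrow> bool" where
  "Talpha p q r a u u1 uh uh1 \<alpha> g f \<longleftrightarrow> maxrel p q r (intv 0 a) g f \<and>
     (\<exists>g1 b0 b1. qd p q r (intv 0 a) g g1 f \<and> bv_plus u u1 uh uh1 g g1 b0 b1 \<and>
        b0 * complex_of_real (cos \<alpha>) + b1 * complex_of_real (sin \<alpha>) = 0)"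

definition Smaxrel :: "(real \<Rightarrow> real) \<Rightarrow> (real \<Rightarrow> real) \<Rightarrow> (real \<Rightarrow> real) \<Rightarrow> ereal \<Rightarrow> pfun \<Rightarrow> pfun \<Rightarrow> bool" where
  "Smaxrel p q r a x f \<longleftrightarrow> maxrel p q r (intv (-a) 0) (fst x) (fst f) \<and> maxrel p q r (intv 0 a) (snd x) (snd f)"

definition Sminrel :: "(real \<Rightarrow> real) \<Rightarrow> (real \<Rightarrow> real) \<Rightarrow> (real \<Rightarrow> real) \<Rightarrow> ereal \<Rightarrow> pfun \<Rightarrow> pfun \<Rightarrow> bool" where
  "Sminrel p q r a = graph_closure r (intv (-a) 0) (intv 0 a)
     (\<lambda>x f. preminrel p q r (intv (-a) 0) (fst x) (fst f) \<and> preminrel p q r (intv 0 a) (snd x) (snd f))"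

definition SR0rel :: "(real \<Rightarrow> real) \<Rightarrow> (real \<Rightarrow> real) \<Rightarrow> (real \<Rightarrow> real) \<Rightarrow> ereal \<Rightarrow>
    (real \<Rightarrow> complex) \<Rightarrow> (real \<Rightarrow> complex) \<Rightarrow> (real \<Rightarrow> complex) \<Rightarrow> (real \<Rightarrow> complex) \<Rightarrow>
    real \<Rightarrow> real \<Rightarrow> real \<Rightarrow> real \<Rightarrow> pfun \<Rightarrow> pfun \<Rightarrow> bool" where
  "SR0rel p q r a u u1 uh uh1 R11 R12 R21 R22 x f \<longleftrightarrow> Smaxrel p q r a x f \<and>
     (\<exists>gm1 gp1 m0 m1 b0 b1.
        qd p q r (intv (-a) 0) (fst x) gm1 (fst f) \<and> qd p q r (intv 0 a) (snd x) gp1 (snd f) \<and>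
        bv_minus u u1 uh uh1 (fst x) gm1 m0 m1 \<and> bv_plus u u1 uh uh1 (snd x) gp1 b0 b1 \<and>
        m0 = complex_of_real R11 * b0 + complex_of_real R12 * b1 \<and>
        m1 = complex_of_real R21 * b0 + complex_of_real R22 * b1)"

end

theory Submission
  imports Defs
begin


lemma indicator_uminus_image: "indicator (uminus ` S) (x::real) = (indicator S (-x) :: 'b::zero_neq_one)"
proof -
  have "x \<in> uminus ` S \<longleftrightarrow> -x \<in> S"
    using image_eqI[of x uminus "-x" S] by auto
  then show ?thesis by (simp add: indicator_def)
qed

lemma refl_set_integrable:
  fixes f :: "real \<Rightarrow> 'a::{banach, second_countable_topology}"
  shows "set_integrable lborel (uminus ` S) (\<lambda>t. f (-t)) \<longleftrightarrow> set_integrable lborel S f"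
  unfolding set_integrable_def
  using lborel_integrable_real_affine_iff[of "-1" "\<lambda>x. indicator S x *\<^sub>R f x" 0]
  by (simp add: indicator_uminus_image)

lemma refl_set_integral:
  fixes f :: "real \<Rightarrow> 'a::{banach, second_countable_topology}"
  shows "(LINT t:uminus ` S|lborel. f (-t)) = (LINT t:S|lborel. f t)"
  unfolding set_lebesgue_integral_def
  using lborel_integral_real_affine[of "-1" "\<lambda>x. indicator S x *\<^sub>R f x" 0]
  by (simp add: indicator_uminus_image)

lemma uminus_Icc: "uminus ` {x..y} = {-y..-(x::real)}"
  by (auto simp: image_iff intro: bexI[of _ "-_"]) 

lemma uminus_intv: "uminus ` intv 0 a = intv (-a) 0"
proof -
  have e: "ereal x < a \<longleftrightarrow> -a < ereal (-x)" for x
  proof -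
    have "ereal (-x) = - ereal x" by simp
    then show ?thesis using ereal_minus_less_minus[of a "ereal x"] by simp
  qed
  show ?thesis
  proof (rule set_eqI)
    fix x
    have "x \<in> uminus ` intv 0 a \<longleftrightarrow> -x \<in> intv 0 a"
      using image_eqI[of x uminus "-x"] by auto
    also have "\<dots> \<longleftrightarrow> x \<in> intv (-a) 0"
    proof -
      have "ereal (-x) < a \<longleftrightarrow> -a < ereal x" using e[of "-x"] by simp
      moreover have "0 < ereal (-x) \<longleftrightarrow> ereal x < 0" by simp
      ultimately show ?thesis unfolding intv_def mem_Collect_eq by blast
    qed
    finally show "x \<in> uminus ` intv 0 a \<longleftrightarrow> x \<in> intv (-a) 0" .
  qed
qed

lemma refl_AE: "(AE x in lborel. P x) \<Longrightarrow> Measurable.pred borel P \<Longrightarrow> AE x in lborel. P (- (x::real))"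
  using AE_borel_affine[of "-1" P 0] by simp



lemma lin_int:
  fixes F H :: "real \<Rightarrow> complex"
  assumes "set_integrable lborel A F" "set_integrable lborel A H"
  shows "set_integrable lborel A (\<lambda>t. c*F t + d*H t)"
    and "(LINT t:A|lborel. c*F t + d*H t) = c*(LINT t:A|lborel. F t) + d*(LINT t:A|lborel. H t)"
proof -
  have 1: "set_integrable lborel A (\<lambda>t. c*F t)" "set_integrable lborel A (\<lambda>t. d*H t)"
    using assms by auto
  show "set_integrable lborel A (\<lambda>t. c*F t + d*H t)" using set_integral_add(1)[OF 1] .
  show "(LINT t:A|lborel. c*F t + d*H t) = c*(LINT t:A|lborel. F t) + d*(LINT t:A|lborel. H t)"
    using set_integral_add(2)[OF 1] by simp
qed

lemma qd_lin:
  assumes "qd p q r I g g1 f" "qd p q r I h h1 k"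
  shows "qd p q r I (\<lambda>t. c*g t + d*h t) (\<lambda>t. c*g1 t + d*h1 t) (\<lambda>t. c*f t + d*k t)"
  unfolding qd_def
proof (intro ballI impI)
  fix x y assume xy: "x \<in> I" "y \<in> I" "x \<le> y"
  let ?F = "\<lambda>t. g1 t / complex_of_real (p t)" and ?H = "\<lambda>t. h1 t / complex_of_real (p t)"
  let ?F2 = "\<lambda>t. complex_of_real (q t) * g t - complex_of_real (r t) * f t"
  let ?H2 = "\<lambda>t. complex_of_real (q t) * h t - complex_of_real (r t) * k t"
  have A: "set_integrable lborel {x..y} ?F" "g y - g x = (LINT t:{x..y}|lborel. ?F t)"
     "set_integrable lborel {x..y} ?F2" "g1 y - g1 x = (LINT t:{x..y}|lborel. ?F2 t)"
    using assms(1) xy unfolding qd_def by blast+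
  have B: "set_integrable lborel {x..y} ?H" "h y - h x = (LINT t:{x..y}|lborel. ?H t)"
     "set_integrable lborel {x..y} ?H2" "h1 y - h1 x = (LINT t:{x..y}|lborel. ?H2 t)"
    using assms(2) xy unfolding qd_def by blast+
  have e1: "(\<lambda>t. (c*g1 t + d*h1 t) / complex_of_real (p t)) = (\<lambda>t. c*?F t + d*?H t)"
    by (auto simp: add_divide_distrib)
  have e2: "(\<lambda>t. complex_of_real (q t) * (c*g t + d*h t) - complex_of_real (r t) * (c*f t + d*k t))
       = (\<lambda>t. c*?F2 t + d*?H2 t)"
    by (auto simp: algebra_simps)
  show "set_integrable lborel {x..y} (\<lambda>t. (c*g1 t + d*h1 t) / complex_of_real (p t)) \<and>
    (c * g y + d * h y) - (c * g x + d * h x) =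
    (LINT t:{x..y}|lborel. (c*g1 t + d*h1 t) / complex_of_real (p t)) \<and>
    set_integrable lborel {x..y} (\<lambda>t. complex_of_real (q t) * (c*g t + d*h t) - complex_of_real (r t) * (c*f t + d*k t)) \<and>
    (c * g1 y + d * h1 y) - (c * g1 x + d * h1 x) =
    (LINT t:{x..y}|lborel. complex_of_real (q t) * (c*g t + d*h t) - complex_of_real (r t) * (c*f t + d*k t))"
    unfolding e1 e2 using lin_int[OF A(1) B(1), of c d] lin_int[OF A(3) B(3), of c d] A(2,4) B(2,4)
    by (auto simp: algebra_simps)
qed

lemma qd_refl:
  assumes qd: "qd p q r J g g1 f"
    and IJ: "\<forall>t\<in>I. -t \<in> J" and conv: "\<forall>x\<in>I. \<forall>y\<in>I. {x..y} \<subseteq> I"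
    and ev: "\<forall>t\<in>I. p (-t) = p t \<and> q (-t) = q t \<and> r (-t) = r t"
  shows "qd p q r I (\<lambda>t. g (-t)) (\<lambda>t. - g1 (-t)) (\<lambda>t. f (-t))"
  unfolding qd_def
proof (intro ballI impI)
  fix x y assume xy: "x \<in> I" "y \<in> I" "x \<le> y"
  let ?F = "\<lambda>t. g1 t / complex_of_real (p t)"
  let ?F2 = "\<lambda>t. complex_of_real (q t) * g t - complex_of_real (r t) * f t"
  have A: "set_integrable lborel {-y..-x} ?F" "g (-x) - g (-y) = (LINT t:{-y..-x}|lborel. ?F t)"
     "set_integrable lborel {-y..-x} ?F2" "g1 (-x) - g1 (-y) = (LINT t:{-y..-x}|lborel. ?F2 t)"
    using qd xy IJ unfolding qd_def by auto
  have U: "uminus ` {-y..-x} = {x..y}" using uminus_Icc[of "-y" "-x"] by simp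
  have sub: "t \<in> {x..y} \<Longrightarrow> t \<in> I" for t using conv xy by blast
  have c1: "t \<in> {x..y} \<Longrightarrow> - g1 (-t) / complex_of_real (p t) = (-1) * ?F (-t)" for t
    using ev sub[of t] by auto
  have c2: "t \<in> {x..y} \<Longrightarrow> complex_of_real (q t) * g (-t) - complex_of_real (r t) * f (-t) = ?F2 (-t)" for t
    using ev sub[of t] by auto
  have i1: "set_integrable lborel {x..y} (\<lambda>t. ?F (-t))"
    using refl_set_integrable[of "{-y..-x}" ?F] A(1) U by simp
  have i2: "set_integrable lborel {x..y} (\<lambda>t. ?F2 (-t))"
    using refl_set_integrable[of "{-y..-x}" ?F2] A(3) U by simp
  have j1: "(LINT t:{x..y}|lborel. ?F (-t)) = (LINT t:{-y..-x}|lborel. ?F t)"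
    using refl_set_integral[of "{-y..-x}" ?F] U by simp
  have j2: "(LINT t:{x..y}|lborel. ?F2 (-t)) = (LINT t:{-y..-x}|lborel. ?F2 t)"
    using refl_set_integral[of "{-y..-x}" ?F2] U by simp
  have k1: "set_integrable lborel {x..y} (\<lambda>t. - g1 (-t) / complex_of_real (p t))"
  proof -
    have "set_integrable lborel {x..y} (\<lambda>t. (-1) * ?F (-t))"
      using i1 by (intro set_integrable_mult_right) 
    moreover have "set_integrable lborel {x..y} (\<lambda>t. - g1 (-t) / complex_of_real (p t)) =
       set_integrable lborel {x..y} (\<lambda>t. (-1) * ?F (-t))"
      by (rule set_integrable_cong, simp, simp, rule c1)
    ultimately show ?thesis by simp
  qed
  have k2: "(LINT t:{x..y}|lborel. - g1 (-t) / complex_of_real (p t)) = (LINT t:{x..y}|lborel. (-1) * ?F (-t))"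
    by (rule set_lebesgue_integral_cong) (use c1 in auto)
  have k3: "set_integrable lborel {x..y} (\<lambda>t. complex_of_real (q t) * g (-t) - complex_of_real (r t) * f (-t))"
  proof -
    have "set_integrable lborel {x..y} (\<lambda>t. complex_of_real (q t) * g (-t) - complex_of_real (r t) * f (-t)) =
       set_integrable lborel {x..y} (\<lambda>t. ?F2 (-t))"
      by (rule set_integrable_cong, simp, simp, rule c2)
    then show ?thesis using i2 by simp
  qed
  have k4: "(LINT t:{x..y}|lborel. complex_of_real (q t) * g (-t) - complex_of_real (r t) * f (-t)) = (LINT t:{x..y}|lborel. ?F2 (-t))"
    by (rule set_lebesgue_integral_cong) (use c2 in auto)
  show "set_integrable lborel {x..y} (\<lambda>t. - g1 (-t) / complex_of_real (p t)) \<and>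
    g (-y) - g (-x) = (LINT t:{x..y}|lborel. - g1 (-t) / complex_of_real (p t)) \<and>
    set_integrable lborel {x..y} (\<lambda>t. complex_of_real (q t) * g (-t) - complex_of_real (r t) * f (-t)) \<and>
    - g1 (-y) - - g1 (-x) = (LINT t:{x..y}|lborel. complex_of_real (q t) * g (-t) - complex_of_real (r t) * f (-t))"
  proof (intro conjI k1 k3)
    have "g (-y) - g (-x) = (-1) * (LINT t:{x..y}|lborel. ?F (-t))"
    proof -
      have "g (-y) - g (-x) = - (g (-x) - g (-y))" by simp
      then show ?thesis using A(2) j1 by simp
    qed
    also have "\<dots> = (LINT t:{x..y}|lborel. (-1) * ?F (-t))"
      by (rule set_integral_mult_right[symmetric])
    also have "\<dots> = (LINT t:{x..y}|lborel. - g1 (-t) / complex_of_real (p t))"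
      using k2 by simp
    finally show "g (-y) - g (-x) = (LINT t:{x..y}|lborel. - g1 (-t) / complex_of_real (p t))" .
    show "- g1 (-y) - - g1 (-x) = (LINT t:{x..y}|lborel. complex_of_real (q t) * g (-t) - complex_of_real (r t) * f (-t))"
      using k4 j2 A(4) by simp
  qed
qed



lemma sbm_comb:
  fixes g h :: "real \<Rightarrow> complex"
  assumes "set_borel_measurable lborel A g" "set_borel_measurable lborel A h"
  shows "set_borel_measurable lborel A (\<lambda>t. c * g t + d * h t)"
proof -
  have e: "(\<lambda>t. indicator A t *\<^sub>R (c * g t + d * h t)) = (\<lambda>t. c * (indicator A t *\<^sub>R g t) + d * (indicator A t *\<^sub>R h t))"
    by (auto simp: indicator_def)
  have [measurable]: "(\<lambda>t. indicator A t *\<^sub>R g t) \<in> borel_measurable lborel" "(\<lambda>t. indicator A t *\<^sub>R h t) \<in> borel_measurable lborel"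
    using assms unfolding set_borel_measurable_def by auto
  show ?thesis unfolding set_borel_measurable_def e by measurable
qed

lemma sbm_rsq:
  fixes F :: "real \<Rightarrow> complex"
  assumes "set_borel_measurable lborel A r" "set_borel_measurable lborel A F"
  shows "set_borel_measurable lborel A (\<lambda>t. r t * (cmod (F t))\<^sup>2)"
proof -
  have e: "(\<lambda>t. indicator A t *\<^sub>R (r t * (cmod (F t))\<^sup>2)) = (\<lambda>t. (indicator A t *\<^sub>R r t) * (cmod (indicator A t *\<^sub>R F t))\<^sup>2)"
    by (auto simp: indicator_def)
  have [measurable]: "(\<lambda>t. indicator A t *\<^sub>R r t) \<in> borel_measurable lborel" "(\<lambda>t. indicator A t *\<^sub>R F t) \<in> borel_measurable lborel"
    using assms unfolding set_borel_measurable_def by auto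
  show ?thesis unfolding set_borel_measurable_def e by measurable
qed

lemma sbm_refl:
  fixes F :: "real \<Rightarrow> 'a::real_normed_vector"
  assumes "set_borel_measurable lborel J F" "uminus ` J = I"
  shows "set_borel_measurable lborel I (\<lambda>t. F (-t))"
proof -
  have m: "(\<lambda>t. indicator J t *\<^sub>R F t) \<in> borel_measurable lborel" using assms(1) unfolding set_borel_measurable_def .
  have "(\<lambda>t. indicator I t *\<^sub>R F (-t)) = (\<lambda>t. indicator J (-t) *\<^sub>R F (-t))"
    using assms(2) indicator_uminus_image[of J] by (auto simp: fun_eq_iff)
  moreover have "(\<lambda>t. indicator J (-t) *\<^sub>R F (-t)) \<in> borel_measurable lborel"
    using measurable_compose[OF _ m, of uminus lborel] by simp
  ultimately show ?thesis unfolding set_borel_measurable_def by simp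
qed

lemma cmod_comb_sq: "(cmod (c * g + d * h))\<^sup>2 \<le> 2 * (cmod c)\<^sup>2 * (cmod g)\<^sup>2 + 2 * (cmod d)\<^sup>2 * (cmod h)\<^sup>2"
proof -
  have "cmod (c * g + d * h) \<le> cmod c * cmod g + cmod d * cmod h"
    by (metis norm_mult norm_triangle_ineq)
  then have "(cmod (c * g + d * h))\<^sup>2 \<le> (cmod c * cmod g + cmod d * cmod h)\<^sup>2"
    by (simp add: power_mono)
  also have "\<dots> \<le> 2 * (cmod c)\<^sup>2 * (cmod g)\<^sup>2 + 2 * (cmod d)\<^sup>2 * (cmod h)\<^sup>2"
  proof -
    have k: "(x+y)^2 \<le> 2*x^2 + 2*y^2" for x y :: real
    proof -
      have "(x+y)^2 = 2*x^2+2*y^2 - (x-y)^2" by (simp add: power2_eq_square algebra_simps)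
      moreover have "0 \<le> (x-y)^2" by simp
      ultimately show ?thesis by linarith
    qed
    show ?thesis using k[of "cmod c * cmod g" "cmod d * cmod h"] by (simp add: power_mult_distrib)
  qed
  finally show ?thesis .
qed

lemma L2w_comb:
  assumes "L2w r A g" "L2w r A h" "set_borel_measurable lborel A r"
  shows "L2w r A (\<lambda>t. c * g t + d * h t)"
proof -
  have mg: "set_borel_measurable lborel A g" and ig: "set_integrable lborel A (\<lambda>x. r x * (cmod (g x))\<^sup>2)"
   and mh: "set_borel_measurable lborel A h" and ih: "set_integrable lborel A (\<lambda>x. r x * (cmod (h x))\<^sup>2)"
    using assms unfolding L2w_def by auto
  have m: "set_borel_measurable lborel A (\<lambda>t. c * g t + d * h t)" by (rule sbm_comb[OF mg mh])
  have i3: "set_integrable lborel A (\<lambda>x. (2 * (cmod c)\<^sup>2) * (r x * (cmod (g x))\<^sup>2) + (2 * (cmod d)\<^sup>2) * (r x * (cmod (h x))\<^sup>2))"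
    using ig ih by (intro set_integral_add(1) set_integrable_mult_right) auto
  have "set_integrable lborel A (\<lambda>x. r x * (cmod (c * g x + d * h x))\<^sup>2)"
  proof (rule set_integrable_bound[OF i3 sbm_rsq[OF assms(3) m]], rule AE_I2, rule impI)
    fix x
    let ?G = "(cmod (g x))\<^sup>2" and ?H = "(cmod (h x))\<^sup>2"
    have "\<bar>r x\<bar> * (cmod (c * g x + d * h x))\<^sup>2 \<le> \<bar>r x\<bar> * (2 * (cmod c)\<^sup>2 * ?G + 2 * (cmod d)\<^sup>2 * ?H)"
      by (intro mult_left_mono cmod_comb_sq) auto
    also have "\<dots> = \<bar>2 * (cmod c)\<^sup>2 * (r x * ?G) + 2 * (cmod d)\<^sup>2 * (r x * ?H)\<bar>"
    proof -
      have "2 * (cmod c)\<^sup>2 * (r x * ?G) + 2 * (cmod d)\<^sup>2 * (r x * ?H) = r x * (2 * (cmod c)\<^sup>2 * ?G + 2 * (cmod d)\<^sup>2 * ?H)"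
        by (simp add: algebra_simps)
      then show ?thesis by (simp add: abs_mult)
    qed
    finally show "norm (r x * (cmod (c * g x + d * h x))\<^sup>2) \<le> norm (2 * (cmod c)\<^sup>2 * (r x * ?G) + 2 * (cmod d)\<^sup>2 * (r x * ?H))"
      by (simp add: abs_mult)
  qed
  then show ?thesis using m unfolding L2w_def by simp
qed

lemma L2w_refl:
  assumes "L2w r J g" "uminus ` J = I" "\<forall>t\<in>I. r (-t) = r t"
  shows "L2w r I (\<lambda>t. g (-t))"
proof -
  have mg: "set_borel_measurable lborel J g" and ig: "set_integrable lborel J (\<lambda>x. r x * (cmod (g x))\<^sup>2)"
    using assms unfolding L2w_def by auto
  have "set_integrable lborel I (\<lambda>x. r (-x) * (cmod (g (-x)))\<^sup>2)"
    using refl_set_integrable[of J "\<lambda>x. r x * (cmod (g x))\<^sup>2"] ig assms(2) by simp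
  moreover have "set_integrable lborel I (\<lambda>x. r (-x) * (cmod (g (-x)))\<^sup>2) = set_integrable lborel I (\<lambda>x. r x * (cmod (g (-x)))\<^sup>2)"
    by (rule set_integrable_cong) (use assms(3) in auto)
  ultimately show ?thesis using sbm_refl[OF mg assms(2)] unfolding L2w_def by simp
qed

lemma intv_sets[measurable]: "intv lo hi \<in> sets lborel"
proof -
  have "intv lo hi = ereal -` {lo<..<hi} \<inter> space lborel" by (auto simp: intv_def)
  moreover have "(\<lambda>x::real. ereal x) \<in> borel_measurable lborel"
    by (rule borel_measurable_ereal) simp
  ultimately show ?thesis using measurable_sets[of "\<lambda>x::real. ereal x" lborel borel "{lo<..<hi}"]
    by simp
qed

lemma normsq_refl:
  assumes "uminus ` J = I" "\<forall>t\<in>I. r (-t) = r t" "I \<in> sets lborel"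
  shows "normsq r I (\<lambda>t. g (-t)) = normsq r J g"
proof -
  have "normsq r I (\<lambda>t. g (-t)) = (LINT x:I|lborel. r (-x) * (cmod (g (-x)))\<^sup>2)"
    unfolding normsq_def by (rule set_lebesgue_integral_cong) (use assms in auto)
  also have "\<dots> = normsq r J g" unfolding normsq_def
    using refl_set_integral[of J "\<lambda>x. r x * (cmod (g x))\<^sup>2"] assms(1) by simp
  finally show ?thesis .
qed



definition kap :: complex where "kap = complex_of_real (1 / sqrt 2)"

lemma kap_sq: "kap * kap = 1/2"
  unfolding kap_def by (simp flip: of_real_mult)

lemma kap_nz: "kap \<noteq> 0" unfolding kap_def by simp

lemma cmod_kap_sq: "(cmod kap)\<^sup>2 = 1/2"
  unfolding kap_def by (simp add: norm_divide power_divide)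

lemma par_pointwise: "(cmod (kap * h + (-kap) * g))\<^sup>2 + (cmod (kap * h + kap * g))\<^sup>2 = (cmod h)\<^sup>2 + (cmod g)\<^sup>2"
proof -
  have a: "kap * h + (-kap) * g = kap * (h - g)" "kap * h + kap * g = kap * (h + g)" by (simp_all add: algebra_simps)
  have b: "(cmod (h - g))\<^sup>2 + (cmod (h + g))\<^sup>2 = 2 * (cmod h)\<^sup>2 + 2 * (cmod g)\<^sup>2"
    unfolding cmod_power2 by (simp add: power2_eq_square algebra_simps)
  show ?thesis unfolding a norm_mult power_mult_distrib cmod_kap_sq
    using b by (simp add: algebra_simps)
qed

lemma normsq_par:
  assumes "L2w r A g" "L2w r A h" "set_borel_measurable lborel A r"
  shows "normsq r A (\<lambda>t. kap * h t + (-kap) * g t) + normsq r A (\<lambda>t. kap * h t + kap * g t) = normsq r A h + normsq r A g"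
proof -
  have i1: "set_integrable lborel A (\<lambda>t. r t * (cmod (kap * h t + (-kap) * g t))\<^sup>2)"
    using L2w_comb[OF assms(2,1,3)] unfolding L2w_def by blast
  have i2: "set_integrable lborel A (\<lambda>t. r t * (cmod (kap * h t + kap * g t))\<^sup>2)"
    using L2w_comb[OF assms(2,1,3)] unfolding L2w_def by blast
  have i3: "set_integrable lborel A (\<lambda>t. r t * (cmod (h t))\<^sup>2)" "set_integrable lborel A (\<lambda>t. r t * (cmod (g t))\<^sup>2)"
    using assms unfolding L2w_def by blast+
  have "normsq r A (\<lambda>t. kap * h t + (-kap) * g t) + normsq r A (\<lambda>t. kap * h t + kap * g t)
     = (LINT t:A|lborel. r t * (cmod (kap * h t + (-kap) * g t))\<^sup>2 + r t * (cmod (kap * h t + kap * g t))\<^sup>2)"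
    unfolding normsq_def using set_integral_add(2)[OF i1 i2] by simp
  also have "\<dots> = (LINT t:A|lborel. r t * (cmod (h t))\<^sup>2 + r t * (cmod (g t))\<^sup>2)"
  proof -
    have "\<And>t. r t * (cmod (kap * h t + (-kap) * g t))\<^sup>2 + r t * (cmod (kap * h t + kap * g t))\<^sup>2 = r t * (cmod (h t))\<^sup>2 + r t * (cmod (g t))\<^sup>2"
      using par_pointwise by (metis distrib_left)
    then show ?thesis by simp
  qed
  also have "\<dots> = normsq r A h + normsq r A g"
    unfolding normsq_def using set_integral_add(2)[OF i3] by simp
  finally show ?thesis .
qed

lemma null_refl:
  assumes "N \<in> null_sets lborel" shows "uminus ` N \<in> null_sets (lborel :: real measure)"
proof -
  have e: "uminus ` N = uminus -` N" by force
  have N: "N \<in> sets borel" using assms by auto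
  have um: "(uminus :: real \<Rightarrow> real) \<in> measurable lborel borel" by simp
  have "emeasure lborel N = emeasure (distr lborel borel uminus) N" by (simp add: lborel_distr_uminus)
  also have "\<dots> = emeasure lborel (uminus -` N \<inter> space lborel)" using emeasure_distr[OF um N] .
  finally have "emeasure lborel (uminus -` N) = 0" using null_setsD1[OF assms] by simp
  moreover have "uminus -` N \<in> sets lborel" using measurable_sets[OF um N] by simp
  ultimately show ?thesis unfolding e by auto
qed

lemma aeq_refl:
  assumes "aeq J g g'" "uminus ` J = I"
  shows "aeq I (\<lambda>t. g (-t)) (\<lambda>t. g' (-t))"
proof -
  obtain N where N0: "{x \<in> space lborel. \<not> (x \<in> J \<longrightarrow> g x = g' x)} \<subseteq> N" "emeasure lborel N = 0" "N \<in> sets lborel"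
    using assms(1) unfolding aeq_def by (rule AE_E)
  then have N: "N \<in> null_sets lborel" "{x. \<not> (x \<in> J \<longrightarrow> g x = g' x)} \<subseteq> N"
    by (auto simp: null_sets_def)
  have "{x. \<not> (x \<in> I \<longrightarrow> g (-x) = g' (-x))} \<subseteq> uminus ` N"
  proof
    fix x assume "x \<in> {x. \<not> (x \<in> I \<longrightarrow> g (-x) = g' (-x))}"
    then have "x \<in> I" "g (-x) \<noteq> g' (-x)" by auto
    then have "-x \<in> J" using assms(2) by force
    then have "-x \<in> N" using N(2) \<open>g (-x) \<noteq> g' (-x)\<close> by auto
    then show "x \<in> uminus ` N" using image_eqI[of x uminus "-x"] by simp
  qed
  then show ?thesis unfolding aeq_def using null_refl[OF N(1)] by (intro AE_I') auto
qed

lemma aeq_comb: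
  assumes "aeq A f f'" "aeq A g g'"
  shows "aeq A (\<lambda>t. c * f t + d * g t) (\<lambda>t. c * f' t + d * g' t)"
  using assms unfolding aeq_def by eventually_elim auto

lemma aeq_eq: "aeq A f f" unfolding aeq_def by simp

lemma bv_lin:
  assumes "bv_plus u u1 uh uh1 g g1 b0 b1" "bv_plus u u1 uh uh1 h h1 e0 e1"
  shows "bv_plus u u1 uh uh1 (\<lambda>t. c * g t + d * h t) (\<lambda>t. c * g1 t + d * h1 t) (c * b0 + d * e0) (c * b1 + d * e1)"
proof -
  have l1: "((\<lambda>x. c * (u x * g1 x - u1 x * g x) + d * (u x * h1 x - u1 x * h x)) \<longlongrightarrow> c * (- b0) + d * (- e0)) (at_right 0)"
    using assms unfolding bv_plus_def by (intro tendsto_intros) auto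
  have l2: "((\<lambda>x. c * (uh x * g1 x - uh1 x * g x) + d * (uh x * h1 x - uh1 x * h x)) \<longlongrightarrow> c * b1 + d * e1) (at_right 0)"
    using assms unfolding bv_plus_def by (intro tendsto_intros) auto
  have e1: "(\<lambda>x. c * (u x * g1 x - u1 x * g x) + d * (u x * h1 x - u1 x * h x)) = (\<lambda>x. u x * (c * g1 x + d * h1 x) - u1 x * (c * g x + d * h x))"
    by (auto simp: algebra_simps)
  have e2: "(\<lambda>x. c * (uh x * g1 x - uh1 x * g x) + d * (uh x * h1 x - uh1 x * h x)) = (\<lambda>x. uh x * (c * g1 x + d * h1 x) - uh1 x * (c * g x + d * h x))"
    by (auto simp: algebra_simps)
  have e3: "c * (- b0) + d * (- e0) = - (c * b0 + d * e0)" by simp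
  show ?thesis using l1 l2 unfolding bv_plus_def e1 e2 e3 by simp
qed

lemma bv_minus_plus:
  "bv_minus u u1 uh uh1 g g1 m0 m1 \<longleftrightarrow> bv_plus u u1 uh uh1 (\<lambda>t. g (-t)) (\<lambda>t. - g1 (-t)) m0 (- m1)"
proof -
  have a: "((\<lambda>x. (- u (-x)) * g1 x - u1 (-x) * g x) \<longlongrightarrow> - m0) (at_left 0) \<longleftrightarrow>
        ((\<lambda>x. u x * (- g1 (-x)) - u1 x * g (-x)) \<longlongrightarrow> - m0) (at_right 0)"
    using filterlim_at_left_to_right[of "\<lambda>x. (- u (-x)) * g1 x - u1 (-x) * g x" "nhds (-m0)" 0] by simp
  have b: "((\<lambda>x. uh (-x) * g1 x - (- uh1 (-x)) * g x) \<longlongrightarrow> m1) (at_left 0) \<longleftrightarrow>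
        ((\<lambda>x. uh x * g1 (-x) + uh1 x * g (-x)) \<longlongrightarrow> m1) (at_right 0)"
    using filterlim_at_left_to_right[of "\<lambda>x. uh (-x) * g1 x - (- uh1 (-x)) * g x" "nhds m1" 0] by simp
  define F where "F = (\<lambda>x. uh x * g1 (-x) + uh1 x * g (-x))"
  have Fe: "(\<lambda>x. uh x * (- g1 (-x)) - uh1 x * g (-x)) = (\<lambda>x. - F x)" unfolding F_def by auto
  have c: "(F \<longlongrightarrow> m1) (at_right 0) \<longleftrightarrow> ((\<lambda>x. - F x) \<longlongrightarrow> - m1) (at_right 0)"
  proof
    assume "(F \<longlongrightarrow> m1) (at_right 0)" then show "((\<lambda>x. - F x) \<longlongrightarrow> - m1) (at_right 0)" by (rule tendsto_minus)
  next
    assume "((\<lambda>x. - F x) \<longlongrightarrow> - m1) (at_right 0)"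
    then have "((\<lambda>x. - (- F x)) \<longlongrightarrow> - (- m1)) (at_right 0)" by (rule tendsto_minus)
    then show "(F \<longlongrightarrow> m1) (at_right 0)" by simp
  qed
  have b': "((\<lambda>x. uh (-x) * g1 x - (- uh1 (-x)) * g x) \<longlongrightarrow> m1) (at_left 0) \<longleftrightarrow> (F \<longlongrightarrow> m1) (at_right 0)"
    using b unfolding F_def .
  show ?thesis unfolding bv_minus_def bv_plus_def a b' c Fe ..
qed

lemma line_arccot: "(z0 * complex_of_real (cos (arccot k)) + z1 * complex_of_real (sin (arccot k)) = 0) \<longleftrightarrow> (complex_of_real k * z0 + z1 = 0)"
proof -
  have s: "sqrt (1 + k\<^sup>2) > 0" by (simp add: add_pos_nonneg)
  have cs: "cos (arccot k) = k / sqrt (1 + k\<^sup>2)" "sin (arccot k) = 1 / sqrt (1 + k\<^sup>2)"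
    unfolding arccot_def by (simp_all add: sin_arctan cos_arctan cos_diff sin_diff)
  have "z0 * complex_of_real (cos (arccot k)) + z1 * complex_of_real (sin (arccot k)) =
      (complex_of_real k * z0 + z1) / complex_of_real (sqrt (1 + k\<^sup>2))"
  proof -
    have S: "complex_of_real (sqrt (1 + k\<^sup>2)) \<noteq> 0" using s by simp
    show ?thesis unfolding cs using S by (simp add: field_simps)
  qed
  then show ?thesis using s by simp
qed

lemma line_pi: "(z0 * complex_of_real (cos pi) + z1 * complex_of_real (sin pi) = 0) \<longleftrightarrow> z0 = 0"
  by simp



lemma alg_w:
  fixes b0 b1 :: complex
  assumes SL: "R11 * R11 - R12 * R21 = 1"
    and al: "\<alpha> = (if R12 \<noteq> 0 then arccot ((R11 + 1) / R12) else if R11 = -1 then arccot (- R21 / 2) else pi)"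
  shows "(of_real R11 * b0 + of_real R12 * b1 - b0) * of_real (cos \<alpha>) + (- (of_real R21 * b0 + of_real R11 * b1) - b1) * of_real (sin \<alpha>) = 0"
proof (cases "R12 = 0")
  case False
  let ?z0 = "of_real R11 * b0 + of_real R12 * b1 - b0" and ?z1 = "- (of_real R21 * b0 + of_real R11 * b1) - b1"
  have B: "complex_of_real R12 \<noteq> 0" using False by simp
  have SLc: "complex_of_real R11 * of_real R11 - of_real R12 * of_real R21 = 1"
    using SL by (metis of_real_1 of_real_diff of_real_mult)
  have "complex_of_real ((R11 + 1) / R12) * ?z0 + ?z1 = ((of_real R11 * of_real R11 - of_real R12 * of_real R21 - 1) * b0) / of_real R12"
    using B by (simp add: field_simps)
  also have "\<dots> = 0" using SLc by simp
  finally show ?thesis using False al line_arccot by simp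
next
  case True
  then have "R11 * R11 = 1" using SL by simp
  then have "R11 = 1 \<or> R11 = -1" by (metis mult_cancel_left1 square_eq_1_iff)
  then show ?thesis
  proof
    assume R: "R11 = 1"
    then show ?thesis using True al by simp
  next
    assume R: "R11 = -1"
    have "complex_of_real (- R21 / 2) * (of_real R11 * b0 + of_real R12 * b1 - b0) + (- (of_real R21 * b0 + of_real R11 * b1) - b1) = 0"
      using R True by (simp add: field_simps)
    moreover have "\<alpha> = arccot (- R21 / 2)" using True R al by simp
    ultimately show ?thesis using line_arccot[of "of_real R11 * b0 + of_real R12 * b1 - b0" "- R21 / 2"] by simp
  qed
qed

lemma alg_v:
  fixes b0 b1 :: complex
  assumes SL: "R11 * R11 - R12 * R21 = 1"
    and al: "\<alpha>' = (if R12 \<noteq> 0 then arccot ((R11 - 1) / R12) else if R11 = -1 then pi else arccot (R21 / 2))"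
  shows "(of_real R11 * b0 + of_real R12 * b1 + b0) * of_real (cos \<alpha>') + (- (of_real R21 * b0 + of_real R11 * b1) + b1) * of_real (sin \<alpha>') = 0"
proof (cases "R12 = 0")
  case False
  have C: "R21 = (R11 * R11 - 1) / R12" using SL False by (simp add: field_simps)
  have B: "complex_of_real R12 \<noteq> 0" using False by simp
  have "complex_of_real ((R11 - 1) / R12) * (of_real R11 * b0 + of_real R12 * b1 + b0) + (- (of_real R21 * b0 + of_real R11 * b1) + b1) = 0"
    unfolding C using B by (simp add: field_simps)
  then show ?thesis using False al line_arccot[of "of_real R11 * b0 + of_real R12 * b1 + b0" "(R11 - 1) / R12"] by simp
next
  case True
  then have "R11 * R11 = 1" using SL by simp
  then have "R11 = 1 \<or> R11 = -1" by (metis mult_cancel_left1 square_eq_1_iff)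
  then show ?thesis
  proof
    assume R: "R11 = -1"
    then show ?thesis using True al by simp
  next
    assume R: "R11 = 1"
    have "complex_of_real (R21 / 2) * (of_real R11 * b0 + of_real R12 * b1 + b0) + (- (of_real R21 * b0 + of_real R11 * b1) + b1) = 0"
      using R True by (simp add: field_simps)
    moreover have "\<alpha>' = arccot (R21 / 2)" using True R al by simp
    ultimately show ?thesis using line_arccot[of "of_real R11 * b0 + of_real R12 * b1 + b0" "R21 / 2"] by simp
  qed
qed

lemma alg_bwd:
  fixes w0 w1 v0 v1 :: complex
  assumes SL: "R11 * R11 - R12 * R21 = 1"
    and al: "\<alpha> = (if R12 \<noteq> 0 then arccot ((R11 + 1) / R12) else if R11 = -1 then arccot (- R21 / 2) else pi)"
    and al': "\<alpha>' = (if R12 \<noteq> 0 then arccot ((R11 - 1) / R12) else if R11 = -1 then pi else arccot (R21 / 2))"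
    and lw: "w0 * of_real (cos \<alpha>) + w1 * of_real (sin \<alpha>) = 0"
    and lv: "v0 * of_real (cos \<alpha>') + v1 * of_real (sin \<alpha>') = 0"
  shows "w0 + v0 = of_real R11 * (v0 - w0) + of_real R12 * (v1 - w1)"
    and "- (w1 + v1) = of_real R21 * (v0 - w0) + of_real R11 * (v1 - w1)"
proof -
  have "(w0 + v0 = of_real R11 * (v0 - w0) + of_real R12 * (v1 - w1)) \<and>
        (- (w1 + v1) = of_real R21 * (v0 - w0) + of_real R11 * (v1 - w1))"
  proof (cases "R12 = 0")
    case False
    have C: "R21 = (R11 * R11 - 1) / R12" using SL False by (simp add: field_simps)
    have B: "complex_of_real R12 \<noteq> 0" using False by simp
    have "complex_of_real ((R11 + 1) / R12) * w0 + w1 = 0" using lw al False line_arccot by simp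
    then have w1: "w1 = - complex_of_real ((R11 + 1) / R12) * w0" by (simp add: eq_neg_iff_add_eq_0 add.commute)
    have "complex_of_real ((R11 - 1) / R12) * v0 + v1 = 0" using lv al' False line_arccot by simp
    then have v1: "v1 = - complex_of_real ((R11 - 1) / R12) * v0" by (simp add: eq_neg_iff_add_eq_0 add.commute)
    show ?thesis unfolding w1 v1 C using B by (simp add: field_simps)
  next
    case True
    then have "R11 * R11 = 1" using SL by simp
    then have "R11 = 1 \<or> R11 = -1" by (metis mult_cancel_left1 square_eq_1_iff)
    then show ?thesis
    proof
      assume R: "R11 = -1"
      have v0: "v0 = 0" using lv al' True R by simp
      have "complex_of_real (- R21 / 2) * w0 + w1 = 0" using lw al True R line_arccot[of w0 "- R21 / 2" w1] by simp
      then have w1: "w1 = complex_of_real (R21 / 2) * w0" by (simp add: eq_neg_iff_add_eq_0 add.commute)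
      show ?thesis unfolding v0 w1 using R True by (simp add: field_simps)
    next
      assume R: "R11 = 1"
      have w0: "w0 = 0" using lw al True R by simp
      have "complex_of_real (R21 / 2) * v0 + v1 = 0" using lv al' True R line_arccot[of v0 "R21 / 2" v1] by simp
      then have v1: "v1 = - complex_of_real (R21 / 2) * v0" by (simp add: eq_neg_iff_add_eq_0 add.commute)
      show ?thesis unfolding w0 v1 using R True by (simp add: field_simps)
    qed
  qed
  then show "w0 + v0 = of_real R11 * (v0 - w0) + of_real R12 * (v1 - w1)"
    and "- (w1 + v1) = of_real R21 * (v0 - w0) + of_real R11 * (v1 - w1)" by auto
qed



lemma intv_conv: "x \<in> intv lo hi \<Longrightarrow> y \<in> intv lo hi \<Longrightarrow> {x..y} \<subseteq> intv lo hi"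
proof
  fix s assume x: "x \<in> intv lo hi" and y: "y \<in> intv lo hi" and s: "s \<in> {x..y}"
  have "lo < ereal x" "ereal y < hi" using x y by (auto simp: intv_def)
  moreover have "ereal x \<le> ereal s" "ereal s \<le> ereal y" using s by auto
  ultimately have "lo < ereal s" "ereal s < hi" by (meson less_le_trans le_less_trans)+
  then show "s \<in> intv lo hi" by (simp add: intv_def)
qed

lemma sbm_restrict:
  assumes "set_borel_measurable lborel (A \<union> B) f" "A \<in> sets lborel"
  shows "set_borel_measurable lborel A (f :: real \<Rightarrow> real)"
proof -
  have e: "(\<lambda>x. indicator A x *\<^sub>R f x) = (\<lambda>x. indicator A x * (indicator (A \<union> B) x *\<^sub>R f x))"
    by (auto simp: indicator_def)
  have [measurable]: "(\<lambda>x. indicator (A \<union> B) x *\<^sub>R f x) \<in> borel_measurable lborel"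
    using assms(1) unfolding set_borel_measurable_def .
  have [measurable]: "A \<in> sets borel" using assms(2) by simp
  show ?thesis unfolding set_borel_measurable_def e by measurable
qed

lemma bv_minus_of_plus:
  assumes "bv_plus u u1 uh uh1 G G1 m0 m1'" "m1 = - m1'"
  shows "bv_minus u u1 uh uh1 (\<lambda>t. G (-t)) (\<lambda>t. - G1 (-t)) m0 m1"
  using assms by (subst bv_minus_plus) simp

lemma kap_sq': "kap * (kap * z) = z / 2"
  using kap_sq by (metis mult.assoc times_divide_eq_left mult_1)

definition UU :: "pfun \<Rightarrow> pfun" where
  "UU x = ((\<lambda>t. kap * fst x (-t) + (-kap) * snd x t), (\<lambda>t. kap * fst x (-t) + kap * snd x t))"

definition VV :: "pfun \<Rightarrow> pfun" where
  "VV y = ((\<lambda>t. kap * fst y (-t) + kap * snd y (-t)), (\<lambda>t. (-kap) * fst y t + kap * snd y t))"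

lemma VU: "VV (UU x) = x"
  unfolding UU_def VV_def by (auto simp: fun_eq_iff algebra_simps kap_sq')

lemma UV: "UU (VV y) = y"
  unfolding UU_def VV_def by (auto simp: fun_eq_iff algebra_simps kap_sq')

theorem theorem4p9:
  fixes p q r :: "real \<Rightarrow> real" and a :: ereal and lam0 :: real
    and u u1 uh uh1 :: "real \<Rightarrow> complex"
    and R11 R12 R21 R22 \<alpha> \<alpha>' :: real
  assumes a_pos: "0 < a"
    and meas: "set_borel_measurable lborel (intv (-a) 0 \<union> intv 0 a) p"
              "set_borel_measurable lborel (intv (-a) 0 \<union> intv 0 a) q"
              "set_borel_measurable lborel (intv (-a) 0 \<union> intv 0 a) r"
    and even: "\<forall>x\<in>intv 0 a. p (-x) = p x \<and> q (-x) = q x \<and> r (-x) = r x"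
    and pos: "AE x in lborel. x \<in> intv (-a) 0 \<union> intv 0 a \<longrightarrow> p x > 0 \<and> r x > 0"
    and loc_int: "\<forall>c d. {c..d} \<subseteq> intv (-a) 0 \<longrightarrow>
         set_integrable lborel {c..d} (\<lambda>x. 1 / p x) \<and> set_integrable lborel {c..d} q \<and>
         set_integrable lborel {c..d} r"
    and LP_minus_a: "\<not> LC_left p q r (-a) 0"
    and LP_plus_a: "\<not> LC_right p q r 0 a"
    and LCNO_0minus: "LC_right p q r (-a) 0" "nonosc_right p q r (-a) 0"
    and LCNO_0plus: "LC_left p q r 0 a" "nonosc_left p q r 0 a"
    and bounded_below: "\<forall>x f. Sminrel p q r a x f \<longrightarrow>
         pinner r (intv (-a) 0) (intv 0 a) f x \<in> \<real> \<and>
         Re (pinner r (intv (-a) 0) (intv 0 a) f x) \<ge> lam0 * pnormsq r (intv (-a) 0) (intv 0 a) x"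
    and u_sol: "solves p q r (intv 0 a) (complex_of_real lam0) u u1"
    and u_real: "\<forall>t\<in>intv 0 a. u t \<in> \<real> \<and> u1 t \<in> \<real>"
    and u_principal: "\<exists>c. 0 < c \<and> ereal c < a \<and> (\<forall>t\<in>{0<..<c}. u t \<noteq> 0) \<and>
         set_nn_integral lborel {0<..<c} (\<lambda>t. ennreal (1 / (p t * (Re (u t))\<^sup>2))) = \<infinity>"
    and uh_sol: "solves p q r (intv 0 a) (complex_of_real lam0) uh uh1"
    and uh_real: "\<forall>t\<in>intv 0 a. uh t \<in> \<real> \<and> uh1 t \<in> \<real>"
    and wronskian: "\<forall>t\<in>intv 0 a. uh t * u1 t - uh1 t * u t = 1"
    and R0_SL2: "R11 * R22 - R12 * R21 = 1"
    and R0_diag: "R11 = R22"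
    and alpha_def: "\<alpha> = (if R12 \<noteq> 0 then arccot ((R11 + 1) / R12)
                         else if R11 = -1 then arccot (- R21 / 2) else pi)"
    and alpha'_def: "\<alpha>' = (if R12 \<noteq> 0 then arccot ((R11 - 1) / R12)
                         else if R11 = -1 then pi else arccot (R21 / 2))"
  shows "unit_equiv r (intv (-a) 0) (intv 0 a) (SR0rel p q r a u u1 uh uh1 R11 R12 R21 R22)
                    r (intv 0 a) (intv 0 a)
                    (\<lambda>x f. Talpha p q r a u u1 uh uh1 \<alpha> (fst x) (fst f) \<and>
                           Talpha p q r a u u1 uh uh1 \<alpha>' (snd x) (snd f))"
proof -
  let ?Im = "intv (-a) 0" and ?Ip = "intv 0 a"
  let ?G1 = "SR0rel p q r a u u1 uh uh1 R11 R12 R21 R22"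
  let ?G2 = "(\<lambda>x f. Talpha p q r a u u1 uh uh1 \<alpha> (fst x) (fst f) \<and>
                           Talpha p q r a u u1 uh uh1 \<alpha>' (snd x) (snd f))"
  have uIm: "uminus ` ?Ip = ?Im" by (rule uminus_intv)
  have uIp: "uminus ` ?Im = ?Ip"
  proof -
    have "uminus ` ?Im = uminus ` uminus ` ?Ip" using uIm by simp
    also have "\<dots> = ?Ip" by (simp add: image_image)
    finally show ?thesis .
  qed
  have IJp: "\<forall>t\<in>?Ip. -t \<in> ?Im" using uIm by blast
  have IJm: "\<forall>t\<in>?Im. -t \<in> ?Ip" using uIp by blast
  have evp: "\<forall>t\<in>?Ip. p (-t) = p t \<and> q (-t) = q t \<and> r (-t) = r t" using even by blast
  have evm: "\<forall>t\<in>?Im. p (-t) = p t \<and> q (-t) = q t \<and> r (-t) = r t"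
  proof
    fix t assume "t \<in> ?Im" then have "-t \<in> ?Ip" using IJm by blast
    then show "p (-t) = p t \<and> q (-t) = q t \<and> r (-t) = r t" using even by force
  qed
  have rp: "\<forall>t\<in>?Ip. r (-t) = r t" and rm: "\<forall>t\<in>?Im. r (-t) = r t" using evp evm by auto
  have convp: "\<forall>x\<in>?Ip. \<forall>y\<in>?Ip. {x..y} \<subseteq> ?Ip" and convm: "\<forall>x\<in>?Im. \<forall>y\<in>?Im. {x..y} \<subseteq> ?Im"
    using intv_conv by blast+
  have mrp: "set_borel_measurable lborel ?Ip r"
    using sbm_restrict[of ?Ip ?Im r, OF _ intv_sets] meas(3) by (simp add: Un_commute)
  have mrm: "set_borel_measurable lborel ?Im r"
    using sbm_restrict[of ?Im ?Ip r, OF _ intv_sets] meas(3) by simp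
  have setp: "?Ip \<in> sets lborel" and setm: "?Im \<in> sets lborel" by (rule intv_sets)+

  have L2U: "L2pair r ?Ip ?Ip (UU x)" if "L2pair r ?Im ?Ip x" for x
  proof -
    have h: "L2w r ?Ip (\<lambda>t. fst x (-t))" using L2w_refl[of r ?Im "fst x" ?Ip] that uIp rp by (simp add: L2pair_def)
    have g: "L2w r ?Ip (snd x)" using that by (simp add: L2pair_def)
    show ?thesis unfolding L2pair_def UU_def fst_conv snd_conv
      using L2w_comb[OF h g mrp, where c=kap and d="-kap"] L2w_comb[OF h g mrp, where c=kap and d=kap] by blast
  qed
  have L2V: "L2pair r ?Im ?Ip (VV y)" if "L2pair r ?Ip ?Ip y" for y
  proof -
    have y1: "L2w r ?Ip (fst y)" and y2: "L2w r ?Ip (snd y)" using that by (auto simp: L2pair_def)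
    have "L2w r ?Ip (\<lambda>t. kap * fst y t + kap * snd y t)" using L2w_comb[OF y1 y2 mrp] .
    then have a1: "L2w r ?Im (\<lambda>t. kap * fst y (-t) + kap * snd y (-t))"
      using L2w_refl[of r ?Ip "\<lambda>t. kap * fst y t + kap * snd y t" ?Im] uIm rm by simp
    show ?thesis unfolding L2pair_def VV_def fst_conv snd_conv using a1 L2w_comb[OF y1 y2 mrp, where c="-kap" and d=kap] by blast
  qed
  have normU: "pnormsq r ?Ip ?Ip (UU x) = pnormsq r ?Im ?Ip x" if "L2pair r ?Im ?Ip x" for x
  proof -
    have h: "L2w r ?Ip (\<lambda>t. fst x (-t))" using L2w_refl[of r ?Im "fst x" ?Ip] that uIp rp by (simp add: L2pair_def)
    have g: "L2w r ?Ip (snd x)" using that by (simp add: L2pair_def)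
    have "pnormsq r ?Ip ?Ip (UU x) = normsq r ?Ip (\<lambda>t. fst x (-t)) + normsq r ?Ip (snd x)"
      unfolding pnormsq_def UU_def fst_conv snd_conv using normsq_par[OF g h mrp] .
    also have "\<dots> = pnormsq r ?Im ?Ip x"
      unfolding pnormsq_def using normsq_refl[of ?Im ?Ip r "fst x"] uIp rp setp by simp
    finally show ?thesis .
  qed
  have paeqU: "paeq ?Ip ?Ip (UU x) (UU x')" if "paeq ?Im ?Ip x x'" for x x'
  proof -
    have a1: "aeq ?Ip (\<lambda>t. fst x (-t)) (\<lambda>t. fst x' (-t))" using aeq_refl[of ?Im "fst x" "fst x'" ?Ip] that uIp
      by (simp add: paeq_def)
    have a2: "aeq ?Ip (snd x) (snd x')" using that by (simp add: paeq_def)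
    show ?thesis unfolding paeq_def UU_def fst_conv snd_conv
      using aeq_comb[OF a1 a2, where c=kap and d="-kap"] aeq_comb[OF a1 a2, where c=kap and d=kap] by blast
  qed
  have paeqV: "paeq ?Im ?Ip (VV y) (VV y')" if "paeq ?Ip ?Ip y y'" for y y'
  proof -
    have a1: "aeq ?Ip (fst y) (fst y')" and a2: "aeq ?Ip (snd y) (snd y')" using that by (auto simp: paeq_def)
    have "aeq ?Im (\<lambda>t. kap * fst y (-t) + kap * snd y (-t)) (\<lambda>t. kap * fst y' (-t) + kap * snd y' (-t))"
      using aeq_refl[OF aeq_comb[OF a1 a2, where c=kap and d=kap] uIm] by simp
    then show ?thesis unfolding paeq_def VV_def fst_conv snd_conv
      using aeq_comb[OF a1 a2, where c="-kap" and d=kap] by blast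
  qed

  have G12: "?G2 (UU x) (UU f)" if "?G1 x f" for x f
  proof -
    from that have sm: "Smaxrel p q r a x f" unfolding SR0rel_def by blast
    from that obtain gm1 gp1 m0 m1 b0 b1 where
      qm: "qd p q r ?Im (fst x) gm1 (fst f)" and qp: "qd p q r ?Ip (snd x) gp1 (snd f)"
      and bm: "bv_minus u u1 uh uh1 (fst x) gm1 m0 m1" and bp: "bv_plus u u1 uh uh1 (snd x) gp1 b0 b1"
      and m0: "m0 = complex_of_real R11 * b0 + complex_of_real R12 * b1"
      and m1: "m1 = complex_of_real R21 * b0 + complex_of_real R22 * b1"
      unfolding SR0rel_def by blast
    have L2x: "L2pair r ?Im ?Ip x" and L2f: "L2pair r ?Im ?Ip f"
      using sm unfolding Smaxrel_def maxrel_def L2pair_def by auto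
    have qh: "qd p q r ?Ip (\<lambda>t. fst x (-t)) (\<lambda>t. - gm1 (-t)) (\<lambda>t. fst f (-t))"
      by (rule qd_refl[OF qm IJp convp evp])
    have bh: "bv_plus u u1 uh uh1 (\<lambda>t. fst x (-t)) (\<lambda>t. - gm1 (-t)) m0 (- m1)"
      using bm bv_minus_plus by blast
    have qw: "qd p q r ?Ip (fst (UU x)) (\<lambda>t. kap * (- gm1 (-t)) + (-kap) * gp1 t) (fst (UU f))"
      using qd_lin[OF qh qp, where c=kap and d="-kap"] unfolding UU_def fst_conv snd_conv .
    have qv: "qd p q r ?Ip (snd (UU x)) (\<lambda>t. kap * (- gm1 (-t)) + kap * gp1 t) (snd (UU f))"
      using qd_lin[OF qh qp, where c=kap and d=kap] unfolding UU_def fst_conv snd_conv .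
    have bw: "bv_plus u u1 uh uh1 (fst (UU x)) (\<lambda>t. kap * (- gm1 (-t)) + (-kap) * gp1 t)
                 (kap * m0 + (-kap) * b0) (kap * (- m1) + (-kap) * b1)"
      using bv_lin[OF bh bp, where c=kap and d="-kap"] unfolding UU_def fst_conv snd_conv .
    have bv: "bv_plus u u1 uh uh1 (snd (UU x)) (\<lambda>t. kap * (- gm1 (-t)) + kap * gp1 t)
                 (kap * m0 + kap * b0) (kap * (- m1) + kap * b1)"
      using bv_lin[OF bh bp, where c=kap and d=kap] unfolding UU_def fst_conv snd_conv .
    have SL: "R11 * R11 - R12 * R21 = 1" using R0_SL2 R0_diag by simp
    have cw: "(kap * m0 + (-kap) * b0) * complex_of_real (cos \<alpha>) + (kap * (- m1) + (-kap) * b1) * complex_of_real (sin \<alpha>) = 0"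
    proof -
      have "(kap * m0 + (-kap) * b0) * complex_of_real (cos \<alpha>) + (kap * (- m1) + (-kap) * b1) * complex_of_real (sin \<alpha>)
        = kap * ((of_real R11 * b0 + of_real R12 * b1 - b0) * of_real (cos \<alpha>) + (- (of_real R21 * b0 + of_real R11 * b1) - b1) * of_real (sin \<alpha>))"
        unfolding m0 m1 R0_diag[symmetric] by (simp add: algebra_simps)
      also have "\<dots> = 0" using alg_w[OF SL alpha_def] by simp
      finally show ?thesis .
    qed
    have cv: "(kap * m0 + kap * b0) * complex_of_real (cos \<alpha>') + (kap * (- m1) + kap * b1) * complex_of_real (sin \<alpha>') = 0"
    proof -
      have "(kap * m0 + kap * b0) * complex_of_real (cos \<alpha>') + (kap * (- m1) + kap * b1) * complex_of_real (sin \<alpha>')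
        = kap * ((of_real R11 * b0 + of_real R12 * b1 + b0) * of_real (cos \<alpha>') + (- (of_real R21 * b0 + of_real R11 * b1) + b1) * of_real (sin \<alpha>'))"
        unfolding m0 m1 R0_diag[symmetric] by (simp add: algebra_simps)
      also have "\<dots> = 0" using alg_v[OF SL alpha'_def] by simp
      finally show ?thesis .
    qed
    have mw: "maxrel p q r ?Ip (fst (UU x)) (fst (UU f))" and mv: "maxrel p q r ?Ip (snd (UU x)) (snd (UU f))"
      using L2U[OF L2x] L2U[OF L2f] qw qv unfolding maxrel_def L2pair_def by blast+
    show ?thesis unfolding Talpha_def using mw mv qw qv bw bv cw cv by blast
  qed

  have G21: "?G1 (VV y) (VV k)" if "?G2 y k" for y k
  proof -
    from that obtain w1 e0 e1 where my1: "maxrel p q r ?Ip (fst y) (fst k)"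
      and qw: "qd p q r ?Ip (fst y) w1 (fst k)" and bw: "bv_plus u u1 uh uh1 (fst y) w1 e0 e1"
      and cw: "e0 * complex_of_real (cos \<alpha>) + e1 * complex_of_real (sin \<alpha>) = 0"
      unfolding Talpha_def by blast
    from that obtain v1 c0 c1 where my2: "maxrel p q r ?Ip (snd y) (snd k)"
      and qv: "qd p q r ?Ip (snd y) v1 (snd k)" and bv: "bv_plus u u1 uh uh1 (snd y) v1 c0 c1"
      and cv: "c0 * complex_of_real (cos \<alpha>') + c1 * complex_of_real (sin \<alpha>') = 0"
      unfolding Talpha_def by blast
    have L2y: "L2pair r ?Ip ?Ip y" and L2k: "L2pair r ?Ip ?Ip k"
      using my1 my2 unfolding maxrel_def L2pair_def by auto
    have qH: "qd p q r ?Ip (\<lambda>t. kap * fst y t + kap * snd y t) (\<lambda>t. kap * w1 t + kap * v1 t) (\<lambda>t. kap * fst k t + kap * snd k t)"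
      by (rule qd_lin[OF qw qv])
    have qm: "qd p q r ?Im (fst (VV y)) (\<lambda>t. - (kap * w1 (-t) + kap * v1 (-t))) (fst (VV k))"
      using qd_refl[OF qH IJm convm evm] unfolding VV_def fst_conv snd_conv .
    have qp: "qd p q r ?Ip (snd (VV y)) (\<lambda>t. (-kap) * w1 t + kap * v1 t) (snd (VV k))"
      using qd_lin[OF qw qv, where c="-kap" and d=kap] unfolding VV_def fst_conv snd_conv .
    have bH: "bv_plus u u1 uh uh1 (\<lambda>t. kap * fst y t + kap * snd y t) (\<lambda>t. kap * w1 t + kap * v1 t)
        (kap * e0 + kap * c0) (kap * e1 + kap * c1)" by (rule bv_lin[OF bw bv])
    have bm: "bv_minus u u1 uh uh1 (fst (VV y)) (\<lambda>t. - (kap * w1 (-t) + kap * v1 (-t)))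
        (kap * e0 + kap * c0) (- (kap * e1 + kap * c1))"
      using bv_minus_of_plus[OF bH refl] unfolding VV_def fst_conv snd_conv .
    have bp: "bv_plus u u1 uh uh1 (snd (VV y)) (\<lambda>t. (-kap) * w1 t + kap * v1 t)
        ((-kap) * e0 + kap * c0) ((-kap) * e1 + kap * c1)"
      using bv_lin[OF bw bv, where c="-kap" and d=kap] unfolding VV_def fst_conv snd_conv .
    have SL: "R11 * R11 - R12 * R21 = 1" using R0_SL2 R0_diag by simp
    note A = alg_bwd[OF SL alpha_def alpha'_def cw cv]
    have e1: "kap * e0 + kap * c0 = complex_of_real R11 * ((-kap) * e0 + kap * c0) + complex_of_real R12 * ((-kap) * e1 + kap * c1)"
    proof -
      have "kap * e0 + kap * c0 = kap * (e0 + c0)" by (simp add: algebra_simps)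
      also have "\<dots> = kap * (of_real R11 * (c0 - e0) + of_real R12 * (c1 - e1))" using A(1) by simp
      also have "\<dots> = complex_of_real R11 * ((-kap) * e0 + kap * c0) + complex_of_real R12 * ((-kap) * e1 + kap * c1)"
        by (simp add: algebra_simps)
      finally show ?thesis .
    qed
    have e2: "- (kap * e1 + kap * c1) = complex_of_real R21 * ((-kap) * e0 + kap * c0) + complex_of_real R22 * ((-kap) * e1 + kap * c1)"
    proof -
      have "- (kap * e1 + kap * c1) = kap * (- (e1 + c1))" by (simp add: algebra_simps)
      also have "\<dots> = kap * (of_real R21 * (c0 - e0) + of_real R11 * (c1 - e1))" using A(2) by simp
      also have "\<dots> = complex_of_real R21 * ((-kap) * e0 + kap * c0) + complex_of_real R22 * ((-kap) * e1 + kap * c1)"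
        unfolding R0_diag[symmetric] by (simp add: algebra_simps)
      finally show ?thesis .
    qed
    have L2Vy: "L2pair r ?Im ?Ip (VV y)" and L2Vk: "L2pair r ?Im ?Ip (VV k)" using L2V L2y L2k by auto
    have sm: "Smaxrel p q r a (VV y) (VV k)"
      unfolding Smaxrel_def maxrel_def using L2Vy L2Vk qm qp unfolding L2pair_def by blast
    show ?thesis unfolding SR0rel_def using sm qm qp bm bp e1 e2 by blast
  qed

  show ?thesis
    unfolding unit_equiv_def
  proof (intro exI[of _ UU] conjI allI impI)
    fix x assume "L2pair r ?Im ?Ip x"
    then show "L2pair r ?Ip ?Ip (UU x)" by (rule L2U)
  next
    fix x y c assume "L2pair r ?Im ?Ip x \<and> L2pair r ?Im ?Ip y"
    have "UU (padd x (psmult c y)) = padd (UU x) (psmult c (UU y))"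
      unfolding UU_def padd_def psmult_def by (auto simp: fun_eq_iff algebra_simps)
    then show "paeq ?Ip ?Ip (UU (padd x (psmult c y))) (padd (UU x) (psmult c (UU y)))"
      by (simp add: paeq_def aeq_eq)
  next
    fix x assume "L2pair r ?Im ?Ip x"
    then show "pnormsq r ?Ip ?Ip (UU x) = pnormsq r ?Im ?Ip x" by (rule normU)
  next
    fix y assume "L2pair r ?Ip ?Ip y"
    then show "\<exists>x. L2pair r ?Im ?Ip x \<and> paeq ?Ip ?Ip (UU x) y"
      using L2V UV by (intro exI[of _ "VV y"]) (simp add: paeq_def aeq_eq)
  next
    fix x f
    show "in_graph ?Im ?Ip ?G1 x f = in_graph ?Ip ?Ip ?G2 (UU x) (UU f)"
    proof
      assume "in_graph ?Im ?Ip ?G1 x f"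
      then obtain x' f' where "paeq ?Im ?Ip x x'" "paeq ?Im ?Ip f f'" "?G1 x' f'"
        unfolding in_graph_def by blast
      then have "paeq ?Ip ?Ip (UU x) (UU x')" "paeq ?Ip ?Ip (UU f) (UU f')" "?G2 (UU x') (UU f')"
        using paeqU[of x x'] paeqU[of f f'] G12[of x' f'] by auto
      then show "in_graph ?Ip ?Ip ?G2 (UU x) (UU f)"
        unfolding in_graph_def by blast
    next
      assume "in_graph ?Ip ?Ip ?G2 (UU x) (UU f)"
      then obtain y' k' where "paeq ?Ip ?Ip (UU x) y'" "paeq ?Ip ?Ip (UU f) k'" "?G2 y' k'"
        unfolding in_graph_def by blast
      then have "paeq ?Im ?Ip (VV (UU x)) (VV y')" "paeq ?Im ?Ip (VV (UU f)) (VV k')" "?G1 (VV y') (VV k')"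
        using paeqV[of "UU x" y'] paeqV[of "UU f" k'] G21[of y' k'] by auto
      then have "paeq ?Im ?Ip x (VV y')" "paeq ?Im ?Ip f (VV k')" "?G1 (VV y') (VV k')"
        unfolding VU by auto
      then show "in_graph ?Im ?Ip ?G1 x f" unfolding in_graph_def by blast
    qed
  qed
qed

end
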